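(* Let $G$ be an elementary abelian $3$-group, let $S$ be a maximal sum-free set in $G$, and let $x\in S$. Then (i) $x^{-1}S=S^{-1}S$; and (ii) $xS=S^{-1}=SS$.
   Context: A non-empty subset $S$ of a group $G$ is called sum-free if for all $s_1,s_2\in S$ (including the case $s_1=s_2$) one has $s_1s_2\notin S$. A maximal sum-free set in a finite group $G$ means a sum-free set of largest possible cardinality among all sum-free sets in $G$. Notation: $xS=\{xs: s\in S\}$, $x^{-1}S=\{x^{-1}s: s\in S\}$, $S^{-1}=\{s^{-1}: s\in S\}$, $SS=\{st: s,t\in S\}$, $S^{-1}S=\{s^{-1}t: s,t\in S\}$. *)

theory Defs
  imports "HOL-Algebra.Algebra"
begin

definition sum_free :: "('a, 'b) monoid_scheme \<Rightarrow> 'a set \<Rightarrow> bool" where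
  "sum_free G S \<longleftrightarrow> S \<subseteq> carrier G \<and> S \<noteq> {} \<and>
     (\<forall>s1\<in>S. \<forall>s2\<in>S. s1 \<otimes>\<^bsub>G\<^esub> s2 \<notin> S)"

definition maximal_sum_free :: "('a, 'b) monoid_scheme \<Rightarrow> 'a set \<Rightarrow> bool" where
  "maximal_sum_free G S \<longleftrightarrow> sum_free G S \<and>
     (\<forall>T. sum_free G T \<longrightarrow> card T \<le> card S)"

definition elementary_abelian_3_group :: "('a, 'b) monoid_scheme \<Rightarrow> bool" where
  "elementary_abelian_3_group G \<longleftrightarrow> comm_group G \<and> finite (carrier G) \<and>
     (\<forall>x\<in>carrier G. x [^]\<^bsub>G\<^esub> (3::nat) = \<one>\<^bsub>G\<^esub>)"

end

theory Submission
  imports Defs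
begin

context comm_group
begin

lemma lcoset_img: "(a <# S) = (\<lambda>s. a \<otimes> s) ` S"
  unfolding l_coset_def by auto

lemma card_lcoset:
  assumes "a \<in> carrier G" "S \<subseteq> carrier G"
  shows "card (a <# S) = card S"
proof -
  have "inj_on (\<lambda>s. a \<otimes> s) S"
  proof (rule inj_onI)
    fix u v assume "u \<in> S" "v \<in> S" "a \<otimes> u = a \<otimes> v"
    moreover have "u \<in> carrier G" "v \<in> carrier G" using assms \<open>u \<in> S\<close> \<open>v \<in> S\<close> by auto
    ultimately show "u = v" using assms(1) by simp
  qed
  thus ?thesis by (simp add: lcoset_img card_image)
qed

lemma inv_cube:
  assumes cube: "\<forall>y\<in>carrier G. y [^] (3::nat) = \<one>" and y: "y \<in> carrier G"
  shows "inv y = y \<otimes> y"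
proof -
  have "y [^] (3::nat) = y \<otimes> y \<otimes> y"
    using y by (simp add: numeral_3_eq_3 nat_pow_Suc)
  hence "y \<otimes> y \<otimes> y = \<one>" using cube y by simp
  hence "(y \<otimes> y) \<otimes> y = \<one>" by simp
  thus ?thesis using y inv_equality[of "y \<otimes> y" y] by simp
qed

lemma three_bound:
  assumes sf: "sum_free G S" and x: "x \<in> S" and fin: "finite (carrier G)"
    and cube: "\<forall>y\<in>carrier G. y [^] (3::nat) = \<one>"
  shows "3 * card S \<le> card (carrier G)"
    and "3 * card S = card (carrier G) \<Longrightarrow> y \<in> carrier G \<Longrightarrow>
          y \<in> S \<or> y \<in> (x <# S) \<or> y \<in> (inv x <# S)"
proof -
  have SG: "S \<subseteq> carrier G" and sfp: "\<And>a b. a \<in> S \<Longrightarrow> b \<in> S \<Longrightarrow> a \<otimes> b \<notin> S"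
    using sf unfolding sum_free_def by auto
  have xG: "x \<in> carrier G" using SG x by auto
  have d1: "S \<inter> (x <# S) = {}"
    using sfp x unfolding lcoset_img by auto
  have d2: "S \<inter> (inv x <# S) = {}"
  proof (rule ccontr)
    assume "S \<inter> (inv x <# S) \<noteq> {}"
    then obtain s t where s: "s \<in> S" and t: "t \<in> S" and e: "t = inv x \<otimes> s"
      unfolding lcoset_img by auto
    have sG: "s \<in> carrier G" using SG s by auto
    have "x \<otimes> t = s" using e xG sG by (simp add: m_assoc[symmetric])
    thus False using sfp[OF x t] s by simp
  qed
  have d3: "(x <# S) \<inter> (inv x <# S) = {}"
  proof (rule ccontr)
    assume "(x <# S) \<inter> (inv x <# S) \<noteq> {}"
    then obtain s t where s: "s \<in> S" and t: "t \<in> S" and e: "x \<otimes> t = inv x \<otimes> s"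
      unfolding lcoset_img by auto
    have tG: "t \<in> carrier G" using SG t by auto
    have sG: "s \<in> carrier G" using SG s by auto
    have "x \<otimes> (x \<otimes> t) = s" using e xG sG tG inv_solve_left'[of "x \<otimes> t" x s] by simp
    moreover have "x \<otimes> (x \<otimes> t) = (x \<otimes> x) \<otimes> t" using xG tG by (simp add: m_assoc)
    moreover have "x \<otimes> x = inv x" using inv_cube[OF cube xG] by simp
    ultimately have "inv x \<otimes> t = s" by simp
    hence "t = x \<otimes> s" using xG sG tG inv_solve_left'[of s x t] by simp
    thus False using sfp[OF x s] t by simp
  qed
  have sub: "S \<union> (x <# S) \<union> (inv x <# S) \<subseteq> carrier G"
    using SG xG unfolding lcoset_img by auto
  have fS: "finite S" using SG fin finite_subset by auto
  have cu: "card (S \<union> (x <# S) \<union> (inv x <# S)) = 3 * card S"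
  proof -
    have "card (S \<union> (x <# S) \<union> (inv x <# S)) = card (S \<union> (x <# S)) + card (inv x <# S)"
      using d2 d3 fS by (subst card_Un_disjoint) (auto simp: lcoset_img)
    also have "card (S \<union> (x <# S)) = card S + card (x <# S)"
      using d1 fS by (subst card_Un_disjoint) (auto simp: lcoset_img)
    finally show ?thesis using card_lcoset[OF xG SG] card_lcoset[OF inv_closed[OF xG] SG] by simp
  qed
  show "3 * card S \<le> card (carrier G)"
    using card_mono[OF fin sub] cu by simp
  assume eq: "3 * card S = card (carrier G)" and y: "y \<in> carrier G"
  have "S \<union> (x <# S) \<union> (inv x <# S) = carrier G"
    using card_subset_eq[OF fin sub] cu eq by simp
  thus "y \<in> S \<or> y \<in> (x <# S) \<or> y \<in> (inv x <# S)" using y by blast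
qed

lemma exists_big:
  assumes fin: "finite (carrier G)" and cube: "\<forall>y\<in>carrier G. y [^] (3::nat) = \<one>"
    and nt: "carrier G \<noteq> {\<one>}"
  shows "\<exists>T. sum_free G T \<and> card (carrier G) \<le> 3 * card T"
proof -
  define P where "P n \<longleftrightarrow> (\<exists>M. subgroup M G \<and> M \<noteq> carrier G \<and> card M = n)" for n
  have "subgroup {\<one>} G" by (rule triv_subgroup)
  moreover have "{\<one>} \<noteq> carrier G" using nt by simp
  ultimately have P1: "P 1" unfolding P_def by (intro exI[of _ "{\<one>}"]) simp
  have bnd: "\<forall>y. P y \<longrightarrow> y \<le> card (carrier G)"
  proof (intro allI impI)
    fix y assume "P y"
    then obtain M where "subgroup M G" "card M = y" unfolding P_def by blast
    thus "y \<le> card (carrier G)" using card_mono[OF fin subgroup.subset] by blast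
  qed
  obtain n where Pn: "P n" and mx: "\<And>y. P y \<Longrightarrow> y \<le> n"
    using Nat.ex_has_greatest_nat[of P 1, OF P1 bnd] by blast
  obtain M where M: "subgroup M G" "M \<noteq> carrier G" "card M = n"
    using Pn unfolding P_def by blast
  have MG: "M \<subseteq> carrier G" by (rule subgroup.subset[OF M(1)])
  obtain g where g: "g \<in> carrier G" "g \<notin> M" using M(2) MG by blast
  have ig: "inv g = g \<otimes> g" using inv_cube[OF cube g(1)] .
  define K where "K = M \<union> (g <# M) \<union> (inv g <# M)"
  have KG: "K \<subseteq> carrier G" using MG g unfolding K_def lcoset_img by auto
  have Mmul: "\<And>a b. a \<in> M \<Longrightarrow> b \<in> M \<Longrightarrow> a \<otimes> b \<in> M" by (rule subgroup.m_closed[OF M(1)])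
  have Minv: "\<And>a. a \<in> M \<Longrightarrow> inv a \<in> M" by (rule subgroup.m_inv_closed[OF M(1)])
  have Mone: "\<one> \<in> M" by (rule subgroup.one_closed[OF M(1)])
  have MC: "\<And>a. a \<in> M \<Longrightarrow> a \<in> carrier G" using MG by blast
  have iig: "inv g \<otimes> inv g = g"
  proof -
    have "inv g \<otimes> inv g = inv (g \<otimes> g)" using g(1) by (simp add: inv_mult_group)
    also have "\<dots> = inv (inv g)" using ig by simp
    also have "\<dots> = g" using g(1) by simp
    finally show ?thesis .
  qed
  have K_sub: "subgroup K G"
  proof (rule subgroupI)
    show "K \<subseteq> carrier G" by (rule KG)
    show "K \<noteq> {}" using Mone unfolding K_def by blast
  next
    fix a assume "a \<in> K"
    then consider "a \<in> M" | m where "m \<in> M" "a = g \<otimes> m" | m where "m \<in> M" "a = inv g \<otimes> m"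
      unfolding K_def lcoset_img by blast
    thus "inv a \<in> K"
    proof cases
      case 1 thus ?thesis using Minv unfolding K_def by blast
    next
      case 2
      hence "inv a = inv g \<otimes> inv m" using g MC by (simp add: inv_mult)
      thus ?thesis using Minv 2 unfolding K_def lcoset_img by blast
    next
      case 3
      hence "inv a = g \<otimes> inv m" using g MC by (simp add: inv_mult)
      thus ?thesis using Minv 3 unfolding K_def lcoset_img by blast
    qed
  next
    fix a b assume a: "a \<in> K" and b: "b \<in> K"
    define U where "U = {\<one>, g, inv g}"
    have UC: "U \<subseteq> carrier G" using g unfolding U_def by auto
    have Umul: "\<And>u v. u \<in> U \<Longrightarrow> v \<in> U \<Longrightarrow> u \<otimes> v \<in> U"
    proof -
      have f: "g \<otimes> g = inv g" "g \<otimes> inv g = \<one>" "inv g \<otimes> g = \<one>" "inv g \<otimes> inv g = g"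
        "\<one> \<otimes> \<one> = \<one>" "\<one> \<otimes> g = g" "g \<otimes> \<one> = g" "\<one> \<otimes> inv g = inv g" "inv g \<otimes> \<one> = inv g"
        using g(1) ig[symmetric] iig by simp_all
      fix u v assume "u \<in> U" "v \<in> U"
      thus "u \<otimes> v \<in> U" unfolding U_def by (auto simp only: f insert_iff empty_iff simp_thms)
    qed
    have Kc: "\<And>c. c \<in> K \<longleftrightarrow> (\<exists>u\<in>U. \<exists>m\<in>M. c = u \<otimes> m)"
      unfolding K_def lcoset_img U_def using MC by auto
    obtain u m where um: "u \<in> U" "m \<in> M" "a = u \<otimes> m" using a Kc by blast
    obtain v n where vn: "v \<in> U" "n \<in> M" "b = v \<otimes> n" using b Kc by blast
    have uG: "u \<in> carrier G" "v \<in> carrier G" using um(1) vn(1) UC by auto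
    have mG: "m \<in> carrier G" "n \<in> carrier G" using um(2) vn(2) MC by auto
    have "a \<otimes> b = (u \<otimes> v) \<otimes> (m \<otimes> n)"
      using um(3) vn(3) uG mG by (simp add: m_ac)
    thus "a \<otimes> b \<in> K" using Kc Umul um vn Mmul by blast
  qed
  have KG_eq: "K = carrier G"
  proof (rule ccontr)
    assume "K \<noteq> carrier G"
    hence "P (card K)" unfolding P_def using K_sub by blast
    hence le: "card K \<le> card M" using mx M(3) by simp
    have "g \<otimes> \<one> \<in> g <# M" unfolding lcoset_img using Mone by blast
    hence "g \<in> K" using g(1) unfolding K_def by simp
    hence MK: "M \<subset> K" using g(2) unfolding K_def by blast
    have fK: "finite K" using KG fin finite_subset by blast
    have "card M < card K" by (rule psubset_card_mono[OF fK MK])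
    thus False using le by simp
  qed
  have fM: "finite M" using MG fin finite_subset by blast
  have "card (carrier G) \<le> card M + card (g <# M) + card (inv g <# M)"
  proof -
    have "card (carrier G) = card (M \<union> (g <# M) \<union> (inv g <# M))"
      using KG_eq unfolding K_def by simp
    also have "\<dots> \<le> card (M \<union> (g <# M)) + card (inv g <# M)" by (rule card_Un_le)
    finally have "card (carrier G) \<le> card (M \<union> (g <# M)) + card (inv g <# M)" .
    moreover have "card (M \<union> (g <# M)) \<le> card M + card (g <# M)" by (rule card_Un_le)
    ultimately show ?thesis by linarith
  qed
  hence cb: "card (carrier G) \<le> 3 * card (g <# M)"
    using card_lcoset[OF g(1) MG] card_lcoset[OF inv_closed[OF g(1)] MG] by simp
  have "sum_free G (g <# M)"
    unfolding sum_free_def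
  proof (intro conjI ballI)
    show "(g <# M) \<subseteq> carrier G" using g MG unfolding lcoset_img by auto
    show "(g <# M) \<noteq> {}" using Mone unfolding lcoset_img by auto
  next
    fix s1 s2 assume "s1 \<in> (g <# M)" "s2 \<in> (g <# M)"
    then obtain m n where mn: "m \<in> M" "n \<in> M" "s1 = g \<otimes> m" "s2 = g \<otimes> n"
      unfolding lcoset_img by auto
    have mG: "m \<in> carrier G" "n \<in> carrier G" using mn MC by auto
    have "s1 \<otimes> s2 = (g \<otimes> g) \<otimes> (m \<otimes> n)" using mn(3,4) mG g(1) by (simp add: m_ac)
    hence e: "s1 \<otimes> s2 = inv g \<otimes> (m \<otimes> n)" using ig by simp
    show "s1 \<otimes> s2 \<notin> (g <# M)"
    proof
      assume "s1 \<otimes> s2 \<in> (g <# M)"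
      then obtain k where k: "k \<in> M" "inv g \<otimes> (m \<otimes> n) = g \<otimes> k" using e unfolding lcoset_img by auto
      have kG: "k \<in> carrier G" using k MC by auto
      have "g \<otimes> (inv g \<otimes> (m \<otimes> n)) = g \<otimes> (g \<otimes> k)" using k(2) by simp
      hence "m \<otimes> n = (g \<otimes> g) \<otimes> k" using g(1) mG kG by (simp add: m_assoc[symmetric])
      hence "m \<otimes> n = inv g \<otimes> k" using ig by simp
      hence "(m \<otimes> n) \<otimes> inv k = inv g \<otimes> (k \<otimes> inv k)" using g(1) kG mG by (simp add: m_assoc)
      hence "inv g = (m \<otimes> n) \<otimes> inv k" using g(1) kG by simp
      hence "inv g \<in> M" using Mmul Minv k mn by simp
      hence "inv (inv g) \<in> M" using Minv by blast
      thus False using g by simp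
    qed
  qed
  thus ?thesis using cb by blast
qed

lemma main_comm:
  assumes fin: "finite (carrier G)" and cube: "\<forall>y\<in>carrier G. y [^] (3::nat) = \<one>"
    and ms: "maximal_sum_free G S" and x: "x \<in> S"
  shows "(inv x) <# S = (set_inv S) <#> S \<and>
         (x <# S = set_inv S \<and> set_inv S = S <#> S)"
proof -
  have sf: "sum_free G S" using ms unfolding maximal_sum_free_def by blast
  have SG: "S \<subseteq> carrier G" and sfp: "\<And>a b. a \<in> S \<Longrightarrow> b \<in> S \<Longrightarrow> a \<otimes> b \<notin> S"
    using sf unfolding sum_free_def by auto
  have C: "\<And>a. a \<in> S \<Longrightarrow> a \<in> carrier G" using SG by blast
  have xG: "x \<in> carrier G" using C x .
  have "x \<noteq> \<one>" using sfp[OF x x] x by auto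
  hence nt: "carrier G \<noteq> {\<one>}" using xG by blast
  obtain T where T: "sum_free G T" "card (carrier G) \<le> 3 * card T"
    using exists_big[OF fin cube nt] by blast
  have "card T \<le> card S" using ms T(1) unfolding maximal_sum_free_def by blast
  hence eq: "3 * card S = card (carrier G)" using T(2) three_bound(1)[OF sf x fin cube] by linarith
  have part: "\<And>z y. z \<in> S \<Longrightarrow> y \<in> carrier G \<Longrightarrow> y \<notin> S \<Longrightarrow> y \<notin> (z <# S) \<Longrightarrow> y \<in> (inv z <# S)"
    using three_bound(2)[OF sf _ fin cube eq] by blast
  have invsq: "\<And>a. a \<in> S \<Longrightarrow> inv a = a \<otimes> a" using inv_cube[OF cube] C by blast
  have K: "\<And>a b. a \<in> S \<Longrightarrow> b \<in> S \<Longrightarrow> inv (a \<otimes> b) \<in> S"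
  proof -
    fix a b assume a: "a \<in> S" and b: "b \<in> S"
    have aG: "a \<in> carrier G" and bG: "b \<in> carrier G" using a b C by auto
    define y where "y = a \<otimes> inv b"
    have yG: "y \<in> carrier G" using aG bG y_def by simp
    have y1: "y \<notin> S"
    proof
      assume "y \<in> S"
      have "a = y \<otimes> b" using aG bG y_def by (simp add: m_assoc)
      thus False using sfp[OF \<open>y \<in> S\<close> b] a by simp
    qed
    have y2: "y \<notin> (a <# S)"
    proof
      assume "y \<in> (a <# S)"
      then obtain s where s: "s \<in> S" "y = a \<otimes> s" unfolding lcoset_img by auto
      hence "a \<otimes> inv b = a \<otimes> s" using y_def by simp
      hence "inv b = s" using aG bG C s(1) by simp
      hence "b \<otimes> b \<in> S" using invsq[OF b] s by simp
      thus False using sfp[OF b b] by simp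
    qed
    from part[OF a yG y1 y2] obtain t where t: "t \<in> S" "y = inv a \<otimes> t"
      unfolding lcoset_img by auto
    have "t = a \<otimes> y" using t aG C by (simp add: m_assoc[symmetric])
    also have "\<dots> = (a \<otimes> a) \<otimes> inv b" using aG bG y_def by (simp add: m_assoc)
    also have "\<dots> = inv a \<otimes> inv b" using invsq[OF a] by simp
    also have "\<dots> = inv (a \<otimes> b)" using aG bG by (simp add: inv_mult m_comm)
    finally show "inv (a \<otimes> b) \<in> S" using t by simp
  qed
  have A: "x <# S = S <#> S"
  proof
    show "x <# S \<subseteq> S <#> S" unfolding lcoset_img set_mult_def using x by auto
    show "S <#> S \<subseteq> x <# S"
    proof
      fix y assume "y \<in> S <#> S"
      then obtain a b where ab: "a \<in> S" "b \<in> S" "y = a \<otimes> b" unfolding set_mult_def by auto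
      have yG: "y \<in> carrier G" using ab C by simp
      show "y \<in> x <# S"
      proof (rule ccontr)
        assume n: "y \<notin> x <# S"
        from part[OF x yG _ n] sfp[OF ab(1,2)] ab(3) obtain s where s: "s \<in> S" "y = inv x \<otimes> s"
          unfolding lcoset_img by auto
        have cS: "inv y \<in> S" using K[OF ab(1,2)] ab(3) by simp
        have "s = x \<otimes> y" using s xG C by (simp add: m_assoc[symmetric])
        hence "inv y \<otimes> s = x" using yG xG by (simp add: m_lcomm[symmetric] m_assoc[symmetric])
        thus False using sfp[OF cS s(1)] x by simp
      qed
    qed
  qed
  have B: "set_inv S = x <# S"
  proof
    show "set_inv S \<subseteq> x <# S"
    proof
      fix y assume "y \<in> set_inv S"
      then obtain s where s: "s \<in> S" "y = inv s" unfolding SET_INV_def by auto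
      hence "y \<in> S <#> S" using invsq[OF s(1)] unfolding set_mult_def by auto
      thus "y \<in> x <# S" using A by simp
    qed
    show "x <# S \<subseteq> set_inv S"
    proof
      fix y assume "y \<in> x <# S"
      then obtain s where s: "s \<in> S" "y = x \<otimes> s" unfolding lcoset_img by auto
      have "inv y \<in> S" using K[OF x s(1)] s by simp
      moreover have "y = inv (inv y)" using s xG C by simp
      ultimately show "y \<in> set_inv S" unfolding SET_INV_def by blast
    qed
  qed
  have D: "inv x <# S = set_inv S <#> S"
  proof
    show "inv x <# S \<subseteq> set_inv S <#> S"
      unfolding lcoset_img set_mult_def SET_INV_def using x by auto
    show "set_inv S <#> S \<subseteq> inv x <# S"
    proof
      fix y assume "y \<in> set_inv S <#> S"
      then obtain a b where ab: "a \<in> S" "b \<in> S" "y = inv a \<otimes> b"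
        unfolding set_mult_def SET_INV_def by auto
      have aG: "a \<in> carrier G" and bG: "b \<in> carrier G" using ab C by auto
      have yG: "y \<in> carrier G" using ab aG bG by simp
      have bb: "b = a \<otimes> y" using ab aG bG by (simp add: m_assoc[symmetric])
      have y1: "y \<notin> S" using sfp[OF ab(1)] bb ab(2) by auto
      have y2: "y \<notin> x <# S"
      proof
        assume "y \<in> x <# S"
        then obtain s where s: "s \<in> S" "y = x \<otimes> s" unfolding lcoset_img by auto
        have cS: "inv (a \<otimes> x) \<in> S" using K[OF ab(1) x] .
        have sG: "s \<in> carrier G" using C s by simp
        have "b = (a \<otimes> x) \<otimes> s" using bb s aG xG sG by (simp add: m_assoc)
        hence "inv (a \<otimes> x) \<otimes> b = s" using aG xG sG bG inv_solve_left[of s "a \<otimes> x" b] by simp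
        thus False using sfp[OF cS ab(2)] s by simp
      qed
      show "y \<in> inv x <# S" using part[OF x yG y1 y2] .
    qed
  qed
  show ?thesis using A B D by simp
qed

end

theorem proposition1:
  fixes G (structure) and S :: "'a set" and x :: 'a
  assumes "elementary_abelian_3_group G"
    and "maximal_sum_free G S"
    and "x \<in> S"
  shows "(inv x) <# S = (set_inv S) <#> S \<and>
         (x <# S = set_inv S \<and> set_inv S = S <#> S)"
proof -
  have cg: "comm_group G" and fin: "finite (carrier G)"
    and cube: "\<forall>y\<in>carrier G. y [^] (3::nat) = \<one>"
    using assms(1) unfolding elementary_abelian_3_group_def by auto
  show ?thesis using comm_group.main_comm[OF cg fin cube assms(2,3)] .
qed

end
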